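(* For $X\in\mathbb{L}^0(\mathbb{R},\mathcal{F})$ let $I(X)=E(X\mid\mathcal{H}):=E(X^+\mid\mathcal{H})-E(X^-\mid\mathcal{H})$. For $X,Y\in\mathbb{L}^0(\mathbb{R},\mathcal{F})$ we have $I(X+Y)=I(X)+I(Y)$ a.s. on the set $F=\bigcup_{i=1}^5F_i\in\mathcal{H}$, where $F_1=\{E(|X|\mid\mathcal{H})\in\mathbb{R},\ E(|Y|\mid\mathcal{H})\in\mathbb{R}\}$, $F_2=\{E(X^+\mid\mathcal{H})=+\infty,\ E(X^-\mid\mathcal{H})\in\mathbb{R},\ E(Y^-\mid\mathcal{H})\in\mathbb{R}\}$, $F_3=\{E(X^-\mid\mathcal{H})=+\infty,\ E(X^+\mid\mathcal{H})\in\mathbb{R},\ E(Y^+\mid\mathcal{H})\in\mathbb{R}\}$, $F_4=\{E(Y^+\mid\mathcal{H})=+\infty,\ E(X^-\mid\mathcal{H})\in\mathbb{R},\ E(Y^-\mid\mathcal{H})\in\mathbb{R}\}$, $F_5=\{E(Y^-\mid\mathcal{H})=+\infty,\ E(X^+\mid\mathcal{H})\in\mathbb{R},\ E(Y^+\mid\mathcal{H})\in\mathbb{R}\}$.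
   Context: Let $(\Omega,\mathcal{F},\mathbb{P})$ be a probability space with $\mathcal{F}$ complete and $\mathcal{H}\subseteq\mathcal{F}$ a complete sub-$\sigma$-algebra. $\mathbb{L}^0(\mathbb{R},\mathcal{F})$ is the set of real-valued $\mathcal{F}$-measurable random variables. For $Z\ge0$, $E(Z\mid\mathcal{H})$ denotes the (generalized) conditional expectation with values in $[0,+\infty]$. $X^+=\max(X,0)$, $X^-=\max(-X,0)$. Arithmetic on $\overline{\mathbb{R}}=\mathbb{R}\cup\{\pm\infty\}$ uses the conventions $r\pm\infty=\pm\infty$ for $r\in\mathbb{R}$, $\infty-\infty=0$, $\infty+\infty=\infty$, $0\times(\pm\infty)=0$. *)

theory Defs
  imports "HOL-Probability.Probability"
begin

text \<open>Addition on the extended reals with the paper's convention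
  (infinity minus infinity is 0); otherwise it is the usual ereal addition.\<close>
definition ext_add :: "ereal \<Rightarrow> ereal \<Rightarrow> ereal" where
  "ext_add a b = (if (a = \<infinity> \<and> b = -\<infinity>) \<or> (a = -\<infinity> \<and> b = \<infinity>) then 0 else a + b)"

definition ext_sub :: "ereal \<Rightarrow> ereal \<Rightarrow> ereal" where
  "ext_sub a b = ext_add a (- b)"

definition pos_part :: "('a \<Rightarrow> real) \<Rightarrow> 'a \<Rightarrow> ennreal" where
  "pos_part X = (\<lambda>x. ennreal (max (X x) 0))"

definition neg_part :: "('a \<Rightarrow> real) \<Rightarrow> 'a \<Rightarrow> ennreal" where
  "neg_part X = (\<lambda>x. ennreal (max (- X x) 0))"

definition gen_cond_exp :: "'a measure \<Rightarrow> 'a measure \<Rightarrow> ('a \<Rightarrow> real) \<Rightarrow> 'a \<Rightarrow> ereal" where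
  "gen_cond_exp M H X = (\<lambda>x. ext_sub (enn2ereal (nn_cond_exp M H (pos_part X) x))
                                      (enn2ereal (nn_cond_exp M H (neg_part X) x)))"

end

theory Submission
  imports Defs
begin

lemma finE: "(x::ereal) \<ge> 0 \<Longrightarrow> x < \<infinity> \<Longrightarrow> \<exists>t. x = ereal t"
  by (cases x) auto

lemma finB: "(B::ereal) \<le> N + R \<Longrightarrow> N = ereal n \<Longrightarrow> R = ereal r \<Longrightarrow> B < \<infinity>"
  using le_less_trans[of B "ereal (n+r)" \<infinity>] by simp

lemma keyE:
  fixes A B P N Q R :: ereal
  assumes nn: "A\<ge>0" "B\<ge>0" "P\<ge>0" "N\<ge>0" "Q\<ge>0" "R\<ge>0"
  and e: "A + N + R = B + P + Q" and hb: "B \<le> N + R" and ha: "A \<le> P + Q"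
  and c: "(P<\<infinity>\<and>N<\<infinity>\<and>Q<\<infinity>\<and>R<\<infinity>) \<or> (P=\<infinity>\<and>N<\<infinity>\<and>R<\<infinity>) \<or> (N=\<infinity>\<and>P<\<infinity>\<and>Q<\<infinity>)
     \<or> (Q=\<infinity>\<and>N<\<infinity>\<and>R<\<infinity>) \<or> (R=\<infinity>\<and>P<\<infinity>\<and>Q<\<infinity>)"
  shows "ext_sub A B = ext_add (ext_sub P N) (ext_sub Q R)"
proof -
  from c consider (1) "P<\<infinity>" "N<\<infinity>" "Q<\<infinity>" "R<\<infinity>" | (2) "P=\<infinity>" "N<\<infinity>" "R<\<infinity>"
    | (3) "N=\<infinity>" "P<\<infinity>" "Q<\<infinity>" | (4) "Q=\<infinity>" "N<\<infinity>" "R<\<infinity>" | (5) "R=\<infinity>" "P<\<infinity>" "Q<\<infinity>" by blast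
  then show ?thesis
  proof cases
    case 1
    then obtain p n q r where pe: "P = ereal p" "N = ereal n" "Q = ereal q" "R = ereal r"
      using finE nn by metis
    have "B < \<infinity>" using hb pe finB by blast
    moreover have "A < \<infinity>" using ha pe finB by blast
    ultimately obtain a b where "A = ereal a" "B = ereal b" using finE nn by metis
    then show ?thesis using e pe
      by (simp add: ext_sub_def ext_add_def)
  next
    case 2
    then obtain n r where pe: "N = ereal n" "R = ereal r" using finE nn by metis
    have "B < \<infinity>" using hb pe finB by blast
    then obtain b where "B = ereal b" using finE nn by metis
    have "A = \<infinity>" using e 2 pe \<open>B = _\<close> nn by (cases A; cases Q) auto
    show ?thesis using 2 pe \<open>B = _\<close> \<open>A = _\<close> nn
      by (cases Q) (auto simp: ext_sub_def ext_add_def)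
  next
    case 3
    then obtain p q where pe: "P = ereal p" "Q = ereal q" using finE nn by metis
    have "A < \<infinity>" using ha pe finB by blast
    then obtain a where "A = ereal a" using finE nn by metis
    have "B = \<infinity>" using e 3 pe \<open>A = _\<close> nn by (cases B; cases R) auto
    show ?thesis using 3 pe \<open>B = _\<close> \<open>A = _\<close> nn
      by (cases R) (auto simp: ext_sub_def ext_add_def)
  next
    case 4
    then obtain n r where pe: "N = ereal n" "R = ereal r" using finE nn by metis
    have "B < \<infinity>" using hb pe finB by blast
    then obtain b where "B = ereal b" using finE nn by metis
    have "A = \<infinity>" using e 4 pe \<open>B = _\<close> nn by (cases A; cases P) auto
    show ?thesis using 4 pe \<open>B = _\<close> \<open>A = _\<close> nn
      by (cases P) (auto simp: ext_sub_def ext_add_def)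
  next
    case 5
    then obtain p q where pe: "P = ereal p" "Q = ereal q" using finE nn by metis
    have "A < \<infinity>" using ha pe finB by blast
    then obtain a where "A = ereal a" using finE nn by metis
    have "B = \<infinity>" using e 5 pe \<open>A = _\<close> nn by (cases B; cases N) auto
    show ?thesis using 5 pe \<open>B = _\<close> \<open>A = _\<close> nn
      by (cases N) (auto simp: ext_sub_def ext_add_def)
  qed
qed

lemma e2top: "(x::ennreal) = \<infinity> \<longleftrightarrow> enn2ereal x = \<infinity>"
  by (metis enn2ereal_top ennreal.enn2ereal_inject infinity_ennreal_def)

lemma e2lt: "(x::ennreal) < \<infinity> \<longleftrightarrow> enn2ereal x < \<infinity>"
  by (simp add: less_ennreal.rep_eq infinity_ennreal_def)

lemma keyN:
  fixes a b p n q r :: ennreal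
  assumes e: "a + n + r = b + p + q" and hb: "b \<le> n + r" and ha: "a \<le> p + q"
  and c: "(p<\<infinity>\<and>n<\<infinity>\<and>q<\<infinity>\<and>r<\<infinity>) \<or> (p=\<infinity>\<and>n<\<infinity>\<and>r<\<infinity>) \<or> (n=\<infinity>\<and>p<\<infinity>\<and>q<\<infinity>)
     \<or> (q=\<infinity>\<and>n<\<infinity>\<and>r<\<infinity>) \<or> (r=\<infinity>\<and>p<\<infinity>\<and>q<\<infinity>)"
  shows "ext_sub (enn2ereal a) (enn2ereal b) = ext_add (ext_sub (enn2ereal p) (enn2ereal n)) (ext_sub (enn2ereal q) (enn2ereal r))"
proof (rule keyE)
  show "enn2ereal a + enn2ereal n + enn2ereal r = enn2ereal b + enn2ereal p + enn2ereal q"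
    using arg_cong[OF e, of enn2ereal] by (simp add: plus_ennreal.rep_eq)
  show "enn2ereal b \<le> enn2ereal n + enn2ereal r"
    using hb by (simp add: less_eq_ennreal.rep_eq plus_ennreal.rep_eq)
  show "enn2ereal a \<le> enn2ereal p + enn2ereal q"
    using ha by (simp add: less_eq_ennreal.rep_eq plus_ennreal.rep_eq)
  show "(enn2ereal p<\<infinity>\<and>enn2ereal n<\<infinity>\<and>enn2ereal q<\<infinity>\<and>enn2ereal r<\<infinity>) \<or> (enn2ereal p=\<infinity>\<and>enn2ereal n<\<infinity>\<and>enn2ereal r<\<infinity>) \<or> (enn2ereal n=\<infinity>\<and>enn2ereal p<\<infinity>\<and>enn2ereal q<\<infinity>)
     \<or> (enn2ereal q=\<infinity>\<and>enn2ereal n<\<infinity>\<and>enn2ereal r<\<infinity>) \<or> (enn2ereal r=\<infinity>\<and>enn2ereal p<\<infinity>\<and>enn2ereal q<\<infinity>)"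
    using c unfolding e2top e2lt .
qed auto

lemma ptw_eq: "ennreal (max (a+b) 0) + ennreal (max (-a) 0) + ennreal (max (-b) 0)
   = ennreal (max (-(a+b)) 0) + ennreal (max a 0) + ennreal (max (b::real) 0)"
proof -
  have "ennreal (max (a+b) 0) + ennreal (max (-a) 0) + ennreal (max (-b) 0)
     = ennreal (max (a+b) 0 + max (-a) 0 + max (-b) 0)"
    by (simp add: ennreal_plus)
  also have "max (a+b) 0 + max (-a) 0 + max (-b) 0 = max (-(a+b)) 0 + max a 0 + max b 0"
    by (simp add: max_def)
  also have "ennreal (max (-(a+b)) 0 + max a 0 + max b 0)
     = ennreal (max (-(a+b)) 0) + ennreal (max a 0) + ennreal (max (b::real) 0)"
    by (simp add: ennreal_plus)
  finally show ?thesis .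
qed

lemma ptw_le1: "ennreal (max (-(a+b)) 0) \<le> ennreal (max (-a) 0) + ennreal (max (-(b::real)) 0)"
proof -
  have "ennreal (max (-(a+b)) 0) \<le> ennreal (max (-a) 0 + max (-(b::real)) 0)"
    by (rule ennreal_leI) (simp add: max_def)
  then show ?thesis by (simp add: ennreal_plus)
qed

lemma ptw_le2: "ennreal (max (a+b) 0) \<le> ennreal (max a 0) + ennreal (max (b::real) 0)"
proof -
  have "ennreal (max (a+b) 0) \<le> ennreal (max a 0 + max (b::real) 0)"
    by (rule ennreal_leI) (simp add: max_def)
  then show ?thesis by (simp add: ennreal_plus)
qed

lemma ptw_abs: "ennreal \<bar>a::real\<bar> = ennreal (max a 0) + ennreal (max (-a) 0)"
  by (simp add: ennreal_plus[symmetric] max_def del: ennreal_plus)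


theorem mainTheorem17:
  fixes M H :: "'a measure" and X Y :: "'a \<Rightarrow> real"
  assumes "prob_space M"
    and "complete_measure M"
    and "subalgebra M H"
    and "null_sets M \<subseteq> sets H"
    and "X \<in> borel_measurable M"
    and "Y \<in> borel_measurable M"
  defines "F1 \<equiv> {x \<in> space M. nn_cond_exp M H (\<lambda>z. ennreal \<bar>X z\<bar>) x < \<infinity>
                               \<and> nn_cond_exp M H (\<lambda>z. ennreal \<bar>Y z\<bar>) x < \<infinity>}"
    and "F2 \<equiv> {x \<in> space M. nn_cond_exp M H (pos_part X) x = \<infinity>
                               \<and> nn_cond_exp M H (neg_part X) x < \<infinity>
                               \<and> nn_cond_exp M H (neg_part Y) x < \<infinity>}"
    and "F3 \<equiv> {x \<in> space M. nn_cond_exp M H (neg_part X) x = \<infinity>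
                               \<and> nn_cond_exp M H (pos_part X) x < \<infinity>
                               \<and> nn_cond_exp M H (pos_part Y) x < \<infinity>}"
    and "F4 \<equiv> {x \<in> space M. nn_cond_exp M H (pos_part Y) x = \<infinity>
                               \<and> nn_cond_exp M H (neg_part X) x < \<infinity>
                               \<and> nn_cond_exp M H (neg_part Y) x < \<infinity>}"
    and "F5 \<equiv> {x \<in> space M. nn_cond_exp M H (neg_part Y) x = \<infinity>
                               \<and> nn_cond_exp M H (pos_part X) x < \<infinity>
                               \<and> nn_cond_exp M H (pos_part Y) x < \<infinity>}"
  shows "F1 \<union> F2 \<union> F3 \<union> F4 \<union> F5 \<in> sets H \<and>
         (AE x in M. x \<in> F1 \<union> F2 \<union> F3 \<union> F4 \<union> F5 \<longrightarrow>
            gen_cond_exp M H (\<lambda>z. X z + Y z) x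
              = ext_add (gen_cond_exp M H X x) (gen_cond_exp M H Y x))"
proof
  have fms: "finite_measure_subalgebra M H"
    using assms(1,3) by (simp add: finite_measure_subalgebra_def finite_measure_subalgebra_axioms_def prob_space_def)
  interpret finite_measure_subalgebra M H by (rule fms)
  have sp: "space H = space M" using assms(3) by (simp add: subalgebra_def)
  let ?E = "nn_cond_exp M H"
  have mX[measurable]: "X \<in> borel_measurable M" and mY[measurable]: "Y \<in> borel_measurable M"
    using assms(5,6) by auto
  define PX where "PX = pos_part X"
  define NX where "NX = neg_part X"
  define PY where "PY = pos_part Y"
  define NY where "NY = neg_part Y"
  define S where "S = pos_part (\<lambda>z. X z + Y z)"
  define T where "T = neg_part (\<lambda>z. X z + Y z)"
  have [measurable]: "PX \<in> borel_measurable M" "NX \<in> borel_measurable M" "PY \<in> borel_measurable M"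
    "NY \<in> borel_measurable M" "S \<in> borel_measurable M" "T \<in> borel_measurable M"
    unfolding PX_def NX_def PY_def NY_def S_def T_def pos_part_def neg_part_def by measurable
  have "F1 \<in> sets H" "F2 \<in> sets H" "F3 \<in> sets H" "F4 \<in> sets H" "F5 \<in> sets H"
    unfolding F1_def F2_def F3_def F4_def F5_def sp[symmetric] by measurable
  then show "F1 \<union> F2 \<union> F3 \<union> F4 \<union> F5 \<in> sets H" by auto

  have eqf: "(\<lambda>z. S z + NX z + NY z) = (\<lambda>z. T z + PX z + PY z)"
    unfolding S_def T_def PX_def NX_def PY_def NY_def pos_part_def neg_part_def
    using ptw_eq by simp
  have absX: "(\<lambda>z. ennreal \<bar>X z\<bar>) = (\<lambda>z. PX z + NX z)"
    unfolding PX_def NX_def pos_part_def neg_part_def using ptw_abs by simp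
  have absY: "(\<lambda>z. ennreal \<bar>Y z\<bar>) = (\<lambda>z. PY z + NY z)"
    unfolding PY_def NY_def pos_part_def neg_part_def using ptw_abs by simp
  have s1: "AE x in M. ?E S x + ?E NX x = ?E (\<lambda>z. S z + NX z) x" by (rule nn_cond_exp_sum) auto
  have s2: "AE x in M. ?E (\<lambda>z. S z + NX z) x + ?E NY x = ?E (\<lambda>z. S z + NX z + NY z) x"
    by (rule nn_cond_exp_sum) auto
  have t1: "AE x in M. ?E T x + ?E PX x = ?E (\<lambda>z. T z + PX z) x" by (rule nn_cond_exp_sum) auto
  have t2: "AE x in M. ?E (\<lambda>z. T z + PX z) x + ?E PY x = ?E (\<lambda>z. T z + PX z + PY z) x"
    by (rule nn_cond_exp_sum) auto
  have n1: "AE x in M. ?E NX x + ?E NY x = ?E (\<lambda>z. NX z + NY z) x" by (rule nn_cond_exp_sum) auto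
  have p1: "AE x in M. ?E PX x + ?E PY x = ?E (\<lambda>z. PX z + PY z) x" by (rule nn_cond_exp_sum) auto
  have ax: "AE x in M. ?E PX x + ?E NX x = ?E (\<lambda>z. PX z + NX z) x" by (rule nn_cond_exp_sum) auto
  have ay: "AE x in M. ?E PY x + ?E NY x = ?E (\<lambda>z. PY z + NY z) x" by (rule nn_cond_exp_sum) auto
  have m1: "AE x in M. ?E T x \<le> ?E (\<lambda>z. NX z + NY z) x"
  proof (rule nn_cond_exp_mono[OF AE_I2])
    fix z show "T z \<le> NX z + NY z" unfolding T_def NX_def NY_def neg_part_def by (rule ptw_le1)
  qed auto
  have m2: "AE x in M. ?E S x \<le> ?E (\<lambda>z. PX z + PY z) x"
  proof (rule nn_cond_exp_mono[OF AE_I2])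
    fix z show "S z \<le> PX z + PY z" unfolding S_def PX_def PY_def pos_part_def by (rule ptw_le2)
  qed auto
  show "AE x in M. x \<in> F1 \<union> F2 \<union> F3 \<union> F4 \<union> F5 \<longrightarrow>
            gen_cond_exp M H (\<lambda>z. X z + Y z) x
              = ext_add (gen_cond_exp M H X x) (gen_cond_exp M H Y x)"
    using s1 s2 t1 t2 n1 p1 ax ay m1 m2
  proof eventually_elim
    case (elim x)
    have e: "?E S x + ?E NX x + ?E NY x = ?E T x + ?E PX x + ?E PY x"
      using elim(1-4) eqf by simp
    have hb: "?E T x \<le> ?E NX x + ?E NY x" using elim(5,9) by simp
    have ha: "?E S x \<le> ?E PX x + ?E PY x" using elim(6,10) by simp
    show ?case
    proof
      assume xF: "x \<in> F1 \<union> F2 \<union> F3 \<union> F4 \<union> F5"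
      have "(?E PX x<\<infinity>\<and>?E NX x<\<infinity>\<and>?E PY x<\<infinity>\<and>?E NY x<\<infinity>) \<or> (?E PX x=\<infinity>\<and>?E NX x<\<infinity>\<and>?E NY x<\<infinity>)
        \<or> (?E NX x=\<infinity>\<and>?E PX x<\<infinity>\<and>?E PY x<\<infinity>)
        \<or> (?E PY x=\<infinity>\<and>?E NX x<\<infinity>\<and>?E NY x<\<infinity>) \<or> (?E NY x=\<infinity>\<and>?E PX x<\<infinity>\<and>?E PY x<\<infinity>)"
      proof (cases "x \<in> F1")
        case True
        then have "?E PX x + ?E NX x < \<infinity>" "?E PY x + ?E NY x < \<infinity>"
          using elim(7,8) absX absY unfolding F1_def by auto
        then show ?thesis by simp
      next
        case False
        then show ?thesis using xF unfolding F2_def F3_def F4_def F5_def PX_def NX_def PY_def NY_def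
          by blast
      qed
      then show "gen_cond_exp M H (\<lambda>z. X z + Y z) x = ext_add (gen_cond_exp M H X x) (gen_cond_exp M H Y x)"
        unfolding gen_cond_exp_def S_def[symmetric] T_def[symmetric] PX_def[symmetric]
          NX_def[symmetric] PY_def[symmetric] NY_def[symmetric]
        using keyN[OF e hb ha] by simp
    qed
  qed
qed

end
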